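(* Let $m,n,n_i,r$ be positive integers with $n_i\le n$, $\rho>0$, $\lambda>0$, $M_i\in\mathbb R^{m\times n_i}$. For $U\in\mathbb R^{m\times r}$, $V\in\mathbb R^{n_i\times r}$, $S\in\mathbb R^{m\times n_i}$ let $$\mathcal L_i(U,V,S)=\frac12\|UV^T+S-M_i\|_F^2+\frac{\rho}{2}\Big(\|V\|_F^2+\frac{n_i}{n}\|U\|_F^2\Big)+\lambda\|S\|_1,$$ and $g_i(U)=\inf_{V,S}\mathcal L_i(U,V,S)$. Assume the standing boundedness assumption described in the context. Then $g_i$ is differentiable and, for every $U$, $$\nabla_U g_i(U)=\nabla_U\mathcal L_i(U,V_i^*,S_i^* ),$$ where $(V_i^*,S_i^* )=\arg\min_{V,S}\mathcal L_i(U,V,S)$ is the (unique) minimizer for this $U$.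
   Context: $\|S\|_1=\sum_{jk}|S_{jk}|$. Standing assumption (bounded variables): there are constants $C_U,C_V,C_S,C_M$ such that all matrices considered satisfy $\|U\|_F\le C_U$, $\|V\|_F\le C_V$, $\|S\|_F\le C_S$, $\|M_i\|_F\le C_M$ (in particular the minimizers $V_i^*,S_i^*$ obey these bounds). *)

theory Defs
  imports "HOL-Analysis.Analysis"
begin

text \<open>Matrices are typed: U :: real^'r^'m (m x r), V :: real^'r^'k (n_i x r),
  S, M :: real^'k^'m (m x n_i); n_i = CARD('k). The norm on real^'b^'a is the
  Frobenius norm.\<close>

definition l1norm :: "real^'k^'m \<Rightarrow> real" where
  "l1norm S = (\<Sum>j\<in>UNIV. \<Sum>k\<in>UNIV. \<bar>S $ j $ k\<bar>)"

definition lossL :: "nat \<Rightarrow> real \<Rightarrow> real \<Rightarrow> real^'k^'m \<Rightarrow>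
    real^'r^'m \<Rightarrow> real^'r^'k \<Rightarrow> real^'k^'m \<Rightarrow> real" where
  "lossL n rho lam M U V S =
     (1/2) * (norm (U ** transpose V + S - M))\<^sup>2
     + (rho/2) * ((norm V)\<^sup>2 + (real CARD('k) / real n) * (norm U)\<^sup>2)
     + lam * l1norm S"

definition gfun :: "nat \<Rightarrow> real \<Rightarrow> real \<Rightarrow> real^'k^'m \<Rightarrow> real^'r^'m \<Rightarrow> real" where
  "gfun n rho lam M U =
     Inf {lossL n rho lam M U V S | (V :: real^'r^'k) S. True}"

definition is_minimizer :: "nat \<Rightarrow> real \<Rightarrow> real \<Rightarrow> real^'k^'m \<Rightarrow> real^'r^'m \<Rightarrow>
    real^'r^'k \<Rightarrow> real^'k^'m \<Rightarrow> bool" where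
  "is_minimizer n rho lam M U V S \<longleftrightarrow>
     (\<forall>V' S'. lossL n rho lam M U V S \<le> lossL n rho lam M U V' S')"

end

theory Submission
  imports Defs
begin

definition mm :: "real^'r^'m \<Rightarrow> real^'r^'k \<Rightarrow> real^'k^'m" where
  "mm A V = A ** transpose V"

lemma mm_nth: "mm A V $ i $ j = A $ i \<bullet> V $ j"
  by (simp add: mm_def matrix_matrix_mult_def transpose_def inner_vec_def)

lemma mm_zero_right: "mm A 0 = 0"
  by (simp add: vec_eq_iff mm_nth)

lemma mm_add_left: "mm (A + B) V = mm A V + mm B V"
  by (simp add: vec_eq_iff mm_nth inner_add_left)
lemma mm_add_right: "mm A (V + W) = mm A V + mm A W"
  by (simp add: vec_eq_iff mm_nth inner_add_right)
lemma mm_diff_left: "mm (A - B) V = mm A V - mm B V"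
  by (simp add: vec_eq_iff mm_nth inner_diff_left)
lemma mm_diff_right: "mm A (V - W) = mm A V - mm A W"
  by (simp add: vec_eq_iff mm_nth inner_diff_right)
lemma mm_scale_left: "mm (c *\<^sub>R A) V = c *\<^sub>R mm A V"
  by (simp add: vec_eq_iff mm_nth)
lemma mm_scale_right: "mm A (c *\<^sub>R V) = c *\<^sub>R mm A V"
  by (simp add: vec_eq_iff mm_nth)

lemma sq_norm_vec: "(norm (x::'a::real_inner^'n))\<^sup>2 = (\<Sum>i\<in>UNIV. (norm (x$i))\<^sup>2)"
  by (simp add: power2_norm_eq_inner inner_vec_def)

lemma mm_norm: "norm (mm A V) \<le> norm A * norm V"
proof -
  have "(norm (mm A V))\<^sup>2 = (\<Sum>i\<in>UNIV. \<Sum>j\<in>UNIV. (A$i \<bullet> V$j)\<^sup>2)"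
    by (simp add: sq_norm_vec mm_nth)
  also have "\<dots> \<le> (\<Sum>i\<in>UNIV. \<Sum>j\<in>UNIV. (norm (A$i))\<^sup>2 * (norm (V$j))\<^sup>2)"
  proof (intro sum_mono)
    fix i j
    have "\<bar>A$i \<bullet> V$j\<bar> \<le> norm (A$i) * norm (V$j)" by (rule Cauchy_Schwarz_ineq2)
    then have "\<bar>A$i \<bullet> V$j\<bar>\<^sup>2 \<le> (norm (A$i) * norm (V$j))\<^sup>2"
      by (intro power_mono) auto
    then show "(A$i \<bullet> V$j)\<^sup>2 \<le> (norm (A$i))\<^sup>2 * (norm (V$j))\<^sup>2"
      by (simp add: power_mult_distrib)
  qed
  also have "\<dots> = (norm A)\<^sup>2 * (norm V)\<^sup>2"
    by (simp only: sq_norm_vec[of A] sq_norm_vec[of V] sum_product)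
  also have "\<dots> = (norm A * norm V)\<^sup>2" by (simp add: power_mult_distrib)
  finally show ?thesis
    by (meson mult_nonneg_nonneg norm_ge_zero power2_le_imp_le)
qed

lemma bl_mm_left: "bounded_linear (\<lambda>H. mm H V)"
  by (rule bounded_linear_intro[where K="norm V"]) (auto simp: mm_add_left mm_scale_left mm_norm)
lemma bl_mm_right: "bounded_linear (\<lambda>V. mm A V)"
  by (rule bounded_linear_intro[where K="norm A"]) (auto simp: mm_add_right mm_scale_right, metis mm_norm mult.commute)

lemma l1_nonneg: "0 \<le> l1norm S"
  by (simp add: l1norm_def sum_nonneg)
lemma l1_add: "l1norm (S + T) \<le> l1norm S + l1norm T"
  unfolding l1norm_def sum.distrib[symmetric] by (intro sum_mono) (simp add: abs_triangle_ineq)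
lemma l1_scale: "l1norm (c *\<^sub>R S) = \<bar>c\<bar> * l1norm S"
  by (simp add: l1norm_def sum_distrib_left abs_mult)
lemma norm_le_l1: "norm S \<le> l1norm S"
proof -
  have "norm S \<le> (\<Sum>j\<in>UNIV. norm (S$j))"
    unfolding norm_vec_def by (rule L2_set_le_sum) auto
  also have "\<dots> \<le> l1norm S" unfolding l1norm_def
    by (intro sum_mono) (rule norm_le_l1_cart)
  finally show ?thesis .
qed
lemma l1_cont: "continuous_on A l1norm"
  unfolding l1norm_def by (intro continuous_intros)

lemma loss_eq: fixes S :: "real^'k^'m" shows "lossL n rho lam M U V S =
     (1/2) * (norm (mm U V + S - M))\<^sup>2
     + (rho/2) * ((norm V)\<^sup>2 + (real CARD('k) / real n) * (norm U)\<^sup>2)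
     + lam * l1norm S"
  by (simp add: lossL_def mm_def)


lemma mm_cont[continuous_intros]: "continuous_on A f \<Longrightarrow> continuous_on A (\<lambda>x. mm U (f x))"
  by (rule bounded_linear.continuous_on[OF bl_mm_right])
lemma l1_cont'[continuous_intros]: "continuous_on A f \<Longrightarrow> continuous_on A (\<lambda>x. l1norm (f x))"
  unfolding l1norm_def by (intro continuous_intros)

lemma sqn_add: "(norm (x + y :: 'a::real_inner))\<^sup>2 = (norm x)\<^sup>2 + 2 * (x \<bullet> y) + (norm y)\<^sup>2"
  by (simp add: power2_norm_eq_inner inner_add_left inner_add_right inner_commute)

lemma sqn_mid: "(norm ((1/2) *\<^sub>R (x + y) :: 'a::real_inner))\<^sup>2
   = (1/2) * (norm x)\<^sup>2 + (1/2) * (norm y)\<^sup>2 - (1/4) * (norm (x - y))\<^sup>2"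
  by (simp add: power2_norm_eq_inner inner_add_left inner_add_right inner_diff_left inner_diff_right inner_commute algebra_simps)

definition Dl :: "nat \<Rightarrow> real \<Rightarrow> real^'k^'m \<Rightarrow> real^'r^'m \<Rightarrow> real^'r^'k \<Rightarrow> real^'k^'m \<Rightarrow> real^'r^'m \<Rightarrow> real" where
  "Dl n rho M U V S H = (mm U V + S - M) \<bullet> mm H V + rho * (real CARD('k) / real n) * (U \<bullet> H)"

lemma loss_expand:
  fixes S :: "real^'k^'m"
  shows "lossL n rho lam M (U + H) V S = lossL n rho lam M U V S + Dl n rho M U V S H
     + ((1/2) * (norm (mm H V))\<^sup>2 + (rho/2) * (real CARD('k) / real n) * (norm H)\<^sup>2)"
proof -
  have e: "mm (U + H) V + S - M = (mm U V + S - M) + mm H V"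
    by (simp add: mm_add_left algebra_simps)
  show ?thesis
    unfolding loss_eq Dl_def e sqn_add[of "mm U V + S - M"] sqn_add[of U H]
    by (simp add: algebra_simps)
qed

lemma Dl_bl: fixes M :: "real^'k^'m" shows "bounded_linear (Dl n rho M U V S)"
proof (rule bounded_linear_intro[where K="norm (mm U V + S - M) * norm V + \<bar>rho * (real CARD('k) / real n)\<bar> * norm U"])
  fix x y show "Dl n rho M U V S (x + y) = Dl n rho M U V S x + Dl n rho M U V S y"
    by (simp add: Dl_def mm_add_left inner_add_right distrib_left add_divide_distrib)
next
  fix r x show "Dl n rho M U V S (r *\<^sub>R x) = r *\<^sub>R Dl n rho M U V S x"
    by (simp add: Dl_def mm_scale_left algebra_simps)
next
  fix x
  have 1: "\<bar>(mm U V + S - M) \<bullet> mm x V\<bar> \<le> norm (mm U V + S - M) * (norm x * norm V)"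
    by (rule order_trans[OF Cauchy_Schwarz_ineq2]) (intro mult_left_mono mm_norm norm_ge_zero)
  have 2: "\<bar>rho * (real CARD('k) / real n) * (U \<bullet> x)\<bar> \<le> \<bar>rho * (real CARD('k) / real n)\<bar> * (norm U * norm x)"
    unfolding abs_mult[of _ "U \<bullet> x"] by (intro mult_left_mono Cauchy_Schwarz_ineq2) auto
  show "norm (Dl n rho M U V S x) \<le> norm x * (norm (mm U V + S - M) * norm V + \<bar>rho * (real CARD('k) / real n)\<bar> * norm U)"
  proof -
    have "norm (Dl n rho M U V S x) \<le> \<bar>(mm U V + S - M) \<bullet> mm x V\<bar> + \<bar>rho * (real CARD('k) / real n) * (U \<bullet> x)\<bar>"
      unfolding Dl_def real_norm_def by (rule abs_triangle_ineq)
    also have "\<dots> \<le> norm (mm U V + S - M) * (norm x * norm V) + \<bar>rho * (real CARD('k) / real n)\<bar> * (norm U * norm x)"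
      using 1 2 by linarith
    also have "\<dots> = norm x * (norm (mm U V + S - M) * norm V + \<bar>rho * (real CARD('k) / real n)\<bar> * norm U)"
      by (simp add: algebra_simps)
    finally show ?thesis .
  qed
qed

lemma strong_conv:
  fixes S S0 :: "real^'k^'m"
  assumes rho: "rho > 0" and lam: "lam \<ge> 0" and mn: "is_minimizer n rho lam M U V0 S0"
  shows "(1/4) * ((norm ((mm U V + S - M) - (mm U V0 + S0 - M)))\<^sup>2 + rho * (norm (V - V0))\<^sup>2)
     \<le> lossL n rho lam M U V S - lossL n rho lam M U V0 S0"
proof -
  define Vm where "Vm = (1/2) *\<^sub>R (V + V0)"
  define Sm where "Sm = (1/2) *\<^sub>R (S + S0)"
  define c where "c = real CARD('k) / real n"
  have xm: "mm U Vm + Sm - M = (1/2) *\<^sub>R ((mm U V + S - M) + (mm U V0 + S0 - M))"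
    unfolding Vm_def Sm_def mm_add_right mm_scale_right scaleR_add_right scaleR_diff_right
    by (simp add: algebra_simps scaleR_2[symmetric] del: scaleR_2)
  have l1m: "l1norm Sm \<le> (1/2) * l1norm S + (1/2) * l1norm S0"
    unfolding Sm_def using l1_add[of S S0] l1_scale[of "1/2" "S + S0"] by simp
  have "lossL n rho lam M U V0 S0 \<le> lossL n rho lam M U Vm Sm"
    using mn unfolding is_minimizer_def by blast
  also have "\<dots> \<le> (1/2) * lossL n rho lam M U V S + (1/2) * lossL n rho lam M U V0 S0
      - (1/8) * ((norm ((mm U V + S - M) - (mm U V0 + S0 - M)))\<^sup>2 + rho * (norm (V - V0))\<^sup>2)"
    unfolding loss_eq xm sqn_mid Vm_def[symmetric]
    unfolding Vm_def sqn_mid c_def[symmetric]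
    using mult_left_mono[OF l1m lam] by (simp add: algebra_simps)
  finally show ?thesis by linarith
qed

lemma loss_nonneg_parts:
  fixes S :: "real^'k^'m"
  assumes "rho > 0" "lam > 0"
  shows "(rho/2) * (norm V)\<^sup>2 \<le> lossL n rho lam M U V S"
    and "lam * norm S \<le> lossL n rho lam M U V S"
proof -
  have a: "0 \<le> (rho/2) * (real CARD('k) / real n * (norm U)\<^sup>2)" using assms by simp
  have b: "0 \<le> lam * l1norm S" using assms l1_nonneg[of S] by simp
  have c: "lam * norm S \<le> lam * l1norm S" using assms norm_le_l1 by simp
  have q: "0 \<le> (1/2) * (norm (mm U V + S - M))\<^sup>2" by simp
  have d: "(rho/2) * ((norm V)\<^sup>2 + real CARD('k) / real n * (norm U)\<^sup>2)
      = (rho/2) * (norm V)\<^sup>2 + (rho/2) * (real CARD('k) / real n * (norm U)\<^sup>2)"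
    by (simp add: distrib_left)
  show "(rho/2) * (norm V)\<^sup>2 \<le> lossL n rho lam M U V S"
    using a b q d unfolding loss_eq by linarith
  show "lam * norm S \<le> lossL n rho lam M U V S"
  proof -
    have e: "0 \<le> rho/2 * (norm V)\<^sup>2" using assms by simp
    show ?thesis using a c q d e unfolding loss_eq by linarith
  qed
qed

lemma exists_min:
  fixes M :: "real^'k^'m" and U :: "real^'r^'m"
  assumes rho: "rho > 0" and lam: "lam > 0"
  shows "\<exists>V S. is_minimizer n rho lam M U V S"
proof -
  define F where "F = (\<lambda>p::(real^'r^'k) \<times> (real^'k^'m). lossL n rho lam M U (fst p) (snd p))"
  define K where "K = {p. F p \<le> F 0}"
  have cF: "continuous_on UNIV F"
    unfolding F_def loss_eq by (intro continuous_intros)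
  have "closed K" unfolding K_def by (intro closed_Collect_le cF continuous_intros)
  moreover have "bounded K" unfolding bounded_iff
  proof (intro exI ballI)
    fix p assume "p \<in> K"
    then have pk: "F p \<le> F 0" by (simp add: K_def)
    obtain V S where p: "p = (V, S)" by fastforce
    have "(rho/2) * (norm V)\<^sup>2 \<le> F p" "lam * norm S \<le> F p"
      unfolding F_def p using loss_nonneg_parts[OF rho lam] by auto
    with pk have "(rho/2) * (norm V)\<^sup>2 \<le> F 0" "lam * norm S \<le> F 0" by linarith+
    then have "(norm V)\<^sup>2 \<le> 2 * F 0 / rho" "norm S \<le> F 0 / lam"
      using rho lam by (simp_all add: field_simps)
    moreover have "norm V \<le> 1 + (norm V)\<^sup>2"
    proof (cases "norm V \<le> 1")
      case True then show ?thesis using zero_le_power2[of "norm V"] by linarith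
    next
      case False
      then have "norm V * 1 \<le> norm V * norm V" by (intro mult_left_mono) auto
      then show ?thesis by (simp add: power2_eq_square)
    qed
    ultimately show "norm p \<le> 1 + 2 * F 0 / rho + F 0 / lam"
      unfolding p using norm_Pair_le[of V S] by linarith
  qed
  ultimately have "compact K" using compact_eq_bounded_closed by blast
  moreover have "K \<noteq> {}" unfolding K_def by (metis (mono_tags) empty_iff mem_Collect_eq order_refl)
  moreover have "continuous_on K F" using cF
    by (auto intro: continuous_on_subset)
  ultimately obtain p where pK: "p \<in> K" and pmin: "\<forall>y\<in>K. F p \<le> F y"
    using continuous_attains_inf by blast
  have "\<forall>y. F p \<le> F y"
  proof
    fix y show "F p \<le> F y"
    proof (cases "y \<in> K")
      case True then show ?thesis using pmin by blast
    next
      case False then show ?thesis using pK by (auto simp: K_def)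
    qed
  qed
  then show ?thesis unfolding is_minimizer_def F_def
    by (intro exI[of _ "fst p"] exI[of _ "snd p"]) auto
qed


lemma gfun_eq:
  fixes M :: "real^'k^'m" and U :: "real^'r^'m"
  assumes "is_minimizer n rho lam M U V S"
  shows "gfun n rho lam M U = lossL n rho lam M U V S"
  unfolding gfun_def
  by (rule cInf_eq_minimum) (use assms in \<open>auto simp: is_minimizer_def\<close>)

lemma deriv_generic:
  fixes f :: "'a::real_normed_vector \<Rightarrow> real"
  assumes bl: "bounded_linear f'"
    and rem: "\<And>y. norm (y - x) \<le> 1 \<Longrightarrow> \<bar>f y - f x - f' (y - x)\<bar> \<le> K * (norm (y - x))\<^sup>2"
  shows "(f has_derivative f') (at x)"
  unfolding has_derivative_at_alt
proof (intro conjI bl allI impI)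
  fix e :: real assume e: "e > 0"
  define d where "d = min 1 (e / (\<bar>K\<bar> + 1))"
  have d: "d > 0" using e by (simp add: d_def)
  show "\<exists>d>0. \<forall>y. norm (y - x) < d \<longrightarrow> norm (f y - f x - f' (y - x)) \<le> e * norm (y - x)"
  proof (rule exI[of _ d], intro conjI allI impI d)
    fix y assume y: "norm (y - x) < d"
    define h where "h = norm (y - x)"
    have h0: "0 \<le> h" by (simp add: h_def)
    have h1: "h \<le> 1" using y by (simp add: h_def d_def)
    have "h < e / (\<bar>K\<bar> + 1)" using y by (simp add: h_def d_def)
    then have "h * (\<bar>K\<bar> + 1) \<le> e" by (simp add: field_simps)
    then have hk: "\<bar>K\<bar> * h \<le> e" using h0 by (smt (verit) mult_nonneg_nonneg distrib_left mult.commute)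
    have "\<bar>f y - f x - f' (y - x)\<bar> \<le> K * h\<^sup>2" using rem h1 by (simp add: h_def)
    also have "\<dots> \<le> (\<bar>K\<bar> * h) * h" by (simp add: power2_eq_square mult_right_mono h0 mult.assoc[symmetric])
    also have "\<dots> \<le> e * h" by (rule mult_right_mono[OF hk h0])
    finally show "norm (f y - f x - f' (y - x)) \<le> e * norm (y - x)" by (simp add: h_def)
  qed
qed

lemma loss_deriv:
  fixes M :: "real^'k^'m" and U :: "real^'r^'m"
  shows "((\<lambda>U'. lossL n rho lam M U' V S) has_derivative Dl n rho M U V S) (at U)"
proof (rule deriv_generic[OF Dl_bl, where K="(1/2) * (norm V)\<^sup>2 + \<bar>rho * (real CARD('k) / real n)\<bar> / 2"])
  fix y :: "real^'r^'m"
  define H where "H = y - U"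
  have y: "y = U + H" by (simp add: H_def)
  have mmH: "(norm (mm H V))\<^sup>2 \<le> (norm V)\<^sup>2 * (norm H)\<^sup>2"
  proof -
    have "(norm (mm H V))\<^sup>2 \<le> (norm H * norm V)\<^sup>2"
      by (rule power_mono[OF mm_norm norm_ge_zero])
    then show ?thesis by (simp add: power_mult_distrib mult.commute)
  qed
  have r2: "\<bar>(rho/2) * (real CARD('k) / real n) * (norm H)\<^sup>2\<bar> \<le> \<bar>rho * (real CARD('k) / real n)\<bar> / 2 * (norm H)\<^sup>2"
    by (simp add: abs_mult)
  show "\<bar>lossL n rho lam M y V S - lossL n rho lam M U V S - Dl n rho M U V S (y - U)\<bar>
      \<le> ((1/2) * (norm V)\<^sup>2 + \<bar>rho * (real CARD('k) / real n)\<bar> / 2) * (norm (y - U))\<^sup>2"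
  proof -
    have eq: "lossL n rho lam M y V S - lossL n rho lam M U V S - Dl n rho M U V S (y - U)
        = (1/2) * (norm (mm H V))\<^sup>2 + (rho/2) * (real CARD('k) / real n) * (norm H)\<^sup>2"
      unfolding y loss_expand by simp
    have "\<bar>(1/2) * (norm (mm H V))\<^sup>2 + (rho/2) * (real CARD('k) / real n) * (norm H)\<^sup>2\<bar>
        \<le> \<bar>(1/2) * (norm (mm H V))\<^sup>2\<bar> + \<bar>(rho/2) * (real CARD('k) / real n) * (norm H)\<^sup>2\<bar>"
      by (rule abs_triangle_ineq)
    also have "\<dots> \<le> (1/2) * ((norm V)\<^sup>2 * (norm H)\<^sup>2) + \<bar>rho * (real CARD('k) / real n)\<bar> / 2 * (norm H)\<^sup>2"
      using mmH r2 by simp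
    also have "\<dots> = ((1/2) * (norm V)\<^sup>2 + \<bar>rho * (real CARD('k) / real n)\<bar> / 2) * (norm H)\<^sup>2"
      by (simp add: algebra_simps)
    finally show ?thesis unfolding eq H_def .
  qed
qed


lemma le_one_plus_sq: "(x::real) \<le> 1 + x\<^sup>2"
proof (cases "x \<le> 1")
  case True then show ?thesis using zero_le_power2[of x] by linarith
next
  case False
  then have "x * 1 \<le> x * x" by (intro mult_left_mono) auto
  then show ?thesis by (simp add: power2_eq_square)
qed

lemma gfun_deriv:
  fixes M :: "real^'k^'m" and U0 :: "real^'r^'m" and V0 :: "real^'r^'k"
  assumes rho: "rho > 0" and lam: "lam > 0" and mn0: "is_minimizer n rho lam M U0 V0 S0"
  shows "(gfun n rho lam M has_derivative Dl n rho M U0 V0 S0) (at U0)"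
proof -
  define c where "c = real CARD('k) / real n"
  have c0: "c \<ge> 0" by (simp add: c_def)
  define L where "L = (lossL n rho lam M :: real^'r^'m \<Rightarrow> real^'r^'k \<Rightarrow> real^'k^'m \<Rightarrow> real)"
  define X0 where "X0 = mm U0 V0 + S0 - M"
  define B2 where "B2 = (norm M)\<^sup>2 / rho + c * (norm U0 + 1)\<^sup>2"
  define NV where "NV = 1 + B2"
  define A where "A = NV + norm X0"
  define K0 where "K0 = (1/2) * ((norm V0)\<^sup>2 + rho * c)"
  define m0 where "m0 = min 1 rho / 4"
  define C where "C = 2 * (A + K0) / m0 + 1"
  have m0p: "m0 > 0" using rho by (simp add: m0_def)
  have K0p: "K0 \<ge> 0" using rho c0 by (simp add: K0_def)
  have Ap: "A \<ge> 0" unfolding A_def NV_def B2_def using rho c0 by simp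
  have C1: "C \<ge> 1" using m0p Ap K0p by (simp add: C_def)
  have g0: "gfun n rho lam M U0 = L U0 V0 S0" unfolding L_def by (rule gfun_eq[OF mn0])
  show ?thesis
  proof (rule deriv_generic[OF Dl_bl, where K="K0 + A * C"])
    fix y assume hy: "norm (y - U0) \<le> 1"
    define H where "H = y - U0"
    define h where "h = norm H"
    have h0: "h \<ge> 0" by (simp add: h_def)
    have yH: "y = U0 + H" by (simp add: H_def)
    obtain V1 S1 where mn1: "is_minimizer n rho lam M y V1 S1" using exists_min[OF rho lam] by blast
    have g1: "gfun n rho lam M y = L y V1 S1" unfolding L_def by (rule gfun_eq[OF mn1])
    have min1: "L y V1 S1 \<le> L y V0 S0" "L y V1 S1 \<le> L y 0 0"
      using mn1 unfolding is_minimizer_def L_def by auto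
    have min0: "L U0 V0 S0 \<le> L U0 V1 S1" using mn0 unfolding is_minimizer_def L_def by auto
    define D0 where "D0 = Dl n rho M U0 V0 S0 H"
    define D1 where "D1 = Dl n rho M U0 V1 S1 H"
    define R0 where "R0 = (1/2) * (norm (mm H V0))\<^sup>2 + (rho/2) * c * h\<^sup>2"
    define R1 where "R1 = (1/2) * (norm (mm H V1))\<^sup>2 + (rho/2) * c * h\<^sup>2"
    have e0: "L y V0 S0 = L U0 V0 S0 + D0 + R0"
      unfolding L_def yH loss_expand D0_def R0_def c_def h_def by simp
    have e1: "L y V1 S1 = L U0 V1 S1 + D1 + R1"
      unfolding L_def yH loss_expand D1_def R1_def c_def h_def by simp
    have R1p: "R1 \<ge> 0" using rho c0 by (simp add: R1_def)
    have R0b: "R0 \<le> K0 * h\<^sup>2"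
    proof -
      have "(norm (mm H V0))\<^sup>2 \<le> (norm H * norm V0)\<^sup>2"
        by (rule power_mono[OF mm_norm norm_ge_zero])
      then show ?thesis unfolding R0_def K0_def h_def by (simp add: power_mult_distrib algebra_simps)
    qed
    have R0p: "R0 \<ge> 0" using rho c0 by (simp add: R0_def)
    have nV1: "norm V1 \<le> NV"
    proof -
      have "(rho/2) * (norm V1)\<^sup>2 \<le> L y V1 S1"
        unfolding L_def by (rule loss_nonneg_parts(1)[OF rho lam])
      also have "\<dots> \<le> L y 0 0" by (rule min1(2))
      also have "\<dots> = (1/2) * (norm M)\<^sup>2 + (rho/2) * (c * (norm y)\<^sup>2)"
        unfolding L_def loss_eq c_def by (simp add: mm_zero_right l1norm_def)
      also have "\<dots> \<le> (1/2) * (norm M)\<^sup>2 + (rho/2) * (c * (norm U0 + 1)\<^sup>2)"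
      proof -
        have "norm y \<le> norm U0 + 1" using hy norm_triangle_ineq[of U0 "y - U0"] by simp
        then have "(norm y)\<^sup>2 \<le> (norm U0 + 1)\<^sup>2" by (intro power_mono) auto
        then show ?thesis using rho c0 by (simp add: mult_left_mono)
      qed
      finally have "(norm V1)\<^sup>2 \<le> B2" unfolding B2_def using rho by (simp add: field_simps)
      then show ?thesis unfolding NV_def using le_one_plus_sq[of "norm V1"] by linarith
    qed
    define X1 where "X1 = mm U0 V1 + S1 - M"
    define dX where "dX = norm (X1 - X0)"
    define dV where "dV = norm (V1 - V0)"
    define e where "e = dX + dV"
    define \<delta> where "\<delta> = L U0 V1 S1 - L U0 V0 S0"
    have sc: "(1/4) * (dX\<^sup>2 + rho * dV\<^sup>2) \<le> \<delta>"
      using strong_conv[OF rho less_imp_le[OF lam] mn0, of V1 S1]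
      unfolding dX_def dV_def \<delta>_def L_def X1_def X0_def .
    have e0p: "dX \<ge> 0" "dV \<ge> 0" by (simp_all add: dX_def dV_def)
    have sc2: "m0 / 2 * e\<^sup>2 \<le> \<delta>"
    proof -
      have "e\<^sup>2 \<le> 2 * (dX\<^sup>2 + dV\<^sup>2)" unfolding e_def
      proof -
        have "0 \<le> (dX - dV)\<^sup>2" by simp
        then show "(dX + dV)\<^sup>2 \<le> 2 * (dX\<^sup>2 + dV\<^sup>2)" by (simp add: power2_eq_square algebra_simps)
      qed
      then have "m0 / 2 * e\<^sup>2 \<le> m0 * (dX\<^sup>2 + dV\<^sup>2)" using m0p by (simp add: mult_left_mono)
      also have "\<dots> \<le> (1/4) * (dX\<^sup>2 + rho * dV\<^sup>2)"
      proof -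
        have m1: "m0 \<le> 1/4" and m2: "m0 \<le> rho / 4" by (simp_all add: m0_def)
        have "m0 * dX\<^sup>2 \<le> (1/4) * dX\<^sup>2" by (rule mult_right_mono[OF m1 zero_le_power2])
        moreover have "m0 * dV\<^sup>2 \<le> (rho/4) * dV\<^sup>2" by (rule mult_right_mono[OF m2 zero_le_power2])
        ultimately show ?thesis by (simp add: algebra_simps)
      qed
      finally show ?thesis using sc by linarith
    qed
    have dD: "D1 - D0 = (X1 - X0) \<bullet> mm H V1 + X0 \<bullet> mm H (V1 - V0)"
      unfolding D1_def D0_def Dl_def X1_def[symmetric] X0_def[symmetric] mm_diff_right
      by (simp add: inner_diff_left inner_diff_right)
    have dDb: "\<bar>D1 - D0\<bar> \<le> A * e * h"
    proof -
      have 1: "\<bar>(X1 - X0) \<bullet> mm H V1\<bar> \<le> dX * (h * NV)"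
      proof -
        have "\<bar>(X1 - X0) \<bullet> mm H V1\<bar> \<le> dX * norm (mm H V1)"
          unfolding dX_def by (rule Cauchy_Schwarz_ineq2)
        also have "\<dots> \<le> dX * (h * NV)" unfolding h_def
          by (intro mult_left_mono order_trans[OF mm_norm] e0p mult_left_mono nV1 norm_ge_zero)
        finally show ?thesis .
      qed
      have 2: "\<bar>X0 \<bullet> mm H (V1 - V0)\<bar> \<le> norm X0 * (h * dV)"
        unfolding h_def dV_def by (rule order_trans[OF Cauchy_Schwarz_ineq2]) (intro mult_left_mono mm_norm norm_ge_zero)
      have 3: "dX * (h * NV) + norm X0 * (h * dV) \<le> A * e * h"
      proof -
        have NVp: "NV \<ge> 0" unfolding NV_def B2_def using rho c0 by simp
        have "NV \<le> A" "norm X0 \<le> A" unfolding A_def using NVp by simp_all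
        then have "dX * NV \<le> dX * A" "norm X0 * dV \<le> A * dV"
          using e0p by (simp_all add: mult_left_mono mult_right_mono)
        then have "dX * NV + norm X0 * dV \<le> A * e" unfolding e_def by (simp add: algebra_simps)
        then have "(dX * NV + norm X0 * dV) * h \<le> A * e * h" using h0 by (rule mult_right_mono)
        then show ?thesis by (simp add: algebra_simps)
      qed
      show ?thesis unfolding dD using 1 2 3 abs_triangle_ineq[of "(X1 - X0) \<bullet> mm H V1" "X0 \<bullet> mm H (V1 - V0)"]
        by linarith
    qed
    have dup: "\<delta> \<le> A * e * h + K0 * h\<^sup>2"
      using e0 e1 min1(1) R1p R0b dDb unfolding \<delta>_def by linarith
    have eC: "e \<le> C * h"
    proof (cases "e \<le> h")
      case True
      have "1 * h \<le> C * h" by (rule mult_right_mono[OF C1 h0])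
      then show ?thesis using True by simp
    next
      case False
      then have ep: "e > 0" using h0 by linarith
      have "K0 * h\<^sup>2 \<le> K0 * (e * h)" using False h0 K0p
        by (intro mult_left_mono) (simp_all add: power2_eq_square mult_right_mono)
      then have "m0 / 2 * e\<^sup>2 \<le> (A + K0) * h * e" using sc2 dup by (simp add: algebra_simps)
      then have "(m0 / 2 * e) * e \<le> ((A + K0) * h) * e" by (simp add: power2_eq_square algebra_simps)
      then have "m0 / 2 * e \<le> (A + K0) * h" using ep by simp
      then have "e \<le> 2 * (A + K0) / m0 * h" using m0p by (simp add: field_simps)
      also have "\<dots> \<le> C * h" unfolding C_def using h0 by (simp add: algebra_simps)
      finally show ?thesis .
    qed
    have dDb2: "\<bar>D1 - D0\<bar> \<le> A * C * h\<^sup>2"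
    proof -
      have "A * e * h \<le> A * (C * h) * h" using eC Ap h0 by (simp add: mult_left_mono mult_right_mono)
      then show ?thesis using dDb by (simp add: power2_eq_square algebra_simps)
    qed
    have up: "gfun n rho lam M y - gfun n rho lam M U0 - D0 \<le> K0 * h\<^sup>2"
      unfolding g1 g0 using min1(1) e0 R0b by linarith
    have lo: "- (A * C * h\<^sup>2) \<le> gfun n rho lam M y - gfun n rho lam M U0 - D0"
      unfolding g1 g0 using min0 e1 R1p dDb2 by linarith
    have ACp: "A * C * h\<^sup>2 \<ge> 0" using Ap C1 by simp
    show "\<bar>gfun n rho lam M y - gfun n rho lam M U0 - Dl n rho M U0 V0 S0 (y - U0)\<bar>
        \<le> (K0 + A * C) * (norm (y - U0))\<^sup>2"
    proof -
      have k: "K0 * h\<^sup>2 \<ge> 0" using K0p by simp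
      have d: "(K0 + A * C) * h\<^sup>2 = K0 * h\<^sup>2 + A * C * h\<^sup>2" by (simp add: distrib_right)
      have "\<bar>gfun n rho lam M y - gfun n rho lam M U0 - D0\<bar> \<le> (K0 + A * C) * h\<^sup>2"
        unfolding abs_le_iff d using up lo ACp k by linarith
      then show ?thesis unfolding D0_def H_def h_def .
    qed
  qed
qed


lemma min_unique:
  fixes M :: "real^'k^'m" and U :: "real^'r^'m" and V V' :: "real^'r^'k"
  assumes rho: "rho > 0" and lam: "lam > 0"
    and m1: "is_minimizer n rho lam M U V S" and m2: "is_minimizer n rho lam M U V' S'"
  shows "V' = V \<and> S' = S"
proof -
  have le: "lossL n rho lam M U V' S' \<le> lossL n rho lam M U V S" using m2 unfolding is_minimizer_def by blast
  have sc: "(1/4) * ((norm ((mm U V' + S' - M) - (mm U V + S - M)))\<^sup>2 + rho * (norm (V' - V))\<^sup>2) \<le> 0"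
    using strong_conv[OF rho less_imp_le[OF lam] m1, of V' S'] le by linarith
  have a: "0 \<le> (norm ((mm U V' + S' - M) - (mm U V + S - M)))\<^sup>2" by simp
  have b: "0 \<le> rho * (norm (V' - V))\<^sup>2" using rho by simp
  have sc': "(norm ((mm U V' + S' - M) - (mm U V + S - M)))\<^sup>2 + rho * (norm (V' - V))\<^sup>2 \<le> 0"
    using sc by simp
  have "(norm ((mm U V' + S' - M) - (mm U V + S - M)))\<^sup>2 = 0" using sc' a b by linarith
  moreover have "rho * (norm (V' - V))\<^sup>2 = 0" using sc' a b by linarith
  ultimately have x: "(mm U V' + S' - M) - (mm U V + S - M) = 0" and v: "V' = V" using rho by auto
  from x show ?thesis using v by (simp add: algebra_simps)
qed

theorem lemma2:
  fixes n :: nat and rho lam CU CV CS CM :: real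
    and M :: "real^'k^'m"
  assumes "CARD('k) \<le> n"
    and "rho > 0" and "lam > 0"
    and "norm M \<le> CM"
    and "\<And>U' :: real^'r^'m. \<And>V S. norm U' \<le> CU \<Longrightarrow>
            is_minimizer n rho lam M U' V S \<Longrightarrow> norm V \<le> CV \<and> norm S \<le> CS"
  shows "\<forall>U :: real^'r^'m. norm U \<le> CU \<longrightarrow>
           gfun n rho lam M differentiable (at U)
         \<and> (\<exists>!VS. is_minimizer n rho lam M U (fst VS) (snd VS))
         \<and> (\<forall>V S. is_minimizer n rho lam M U V S \<longrightarrow>
               (\<lambda>U'. lossL n rho lam M U' V S) differentiable (at U)
             \<and> (gfun n rho lam M has_derivative
                  frechet_derivative (\<lambda>U'. lossL n rho lam M U' V S) (at U)) (at U))"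
proof (intro allI impI conjI)
  fix U :: "real^'r^'m"
  have rho: "rho > 0" and lam: "lam > 0" using assms by auto
  obtain V0 :: "real^'r^'k" and S0 where mn: "is_minimizer n rho lam M U V0 S0"
    using exists_min[OF rho lam] by blast
  show "gfun n rho lam M differentiable (at U)"
    using gfun_deriv[OF rho lam mn] by (rule differentiableI)
  show "\<exists>!VS. is_minimizer n rho lam M U (fst VS) (snd VS)"
  proof (rule ex1I[of _ "(V0, S0)"])
    show "is_minimizer n rho lam M U (fst (V0, S0)) (snd (V0, S0))" using mn by simp
  next
    fix VS :: "(real^'r^'k) \<times> (real^'k^'m)"
    assume "is_minimizer n rho lam M U (fst VS) (snd VS)"
    then have "fst VS = V0 \<and> snd VS = S0" using min_unique[OF rho lam mn] by blast
    then show "VS = (V0, S0)" by (simp add: prod_eq_iff)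
  qed
    fix V :: "real^'r^'k" and S assume m: "is_minimizer n rho lam M U V S"
    show "(\<lambda>U'. lossL n rho lam M U' V S) differentiable (at U)"
      using loss_deriv by (rule differentiableI)
    have "Dl n rho M U V S = frechet_derivative (\<lambda>U'. lossL n rho lam M U' V S) (at U)"
      by (rule frechet_derivative_at[OF loss_deriv])
    then show "(gfun n rho lam M has_derivative
                  frechet_derivative (\<lambda>U'. lossL n rho lam M U' V S) (at U)) (at U)"
      using gfun_deriv[OF rho lam m] by simp
qed

end
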